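(* Let $M$ be a commutative von Neumann algebra with a faithful normal finite trace $\tau$ such that the Boolean algebra $P(M)$ of all projections of $M$ is continuous (has no atoms), and let $\Lambda$ be a quadratic family of Young functions. Then every additive derivation on $L^{\Lambda}(M,\tau)$ is identically zero.
   Context: For a von Neumann algebra $N$ with faithful normal trace $\tau$, $S(N,\tau)$ is the *-algebra of $\tau$-measurable operators affiliated with $N$. A Young function is $\phi(t)=\int_0^t\varphi(s)ds$ with $\varphi\ge0$ right continuous, nondecreasing, $\varphi(0)=0$, $\varphi(s)>0$ for $s>0$, $\varphi(s)\to\infty$. $L_\phi(N,\tau)=\bigcup_n n\{x\in S(N,\tau):\tau(\phi(|x|))\le1\}$. $\phi_1\prec\phi_2$ means $\phi_1(t)\le\phi_2(ct)$ for $t\ge T$, some $c,T\ge0$. A family $\Lambda$ is quadratic if any two members are $\prec$ some member and for each $\phi\in\Lambda$ there are $\psi\in\Lambda$, $c>0,T\ge0$ with $\phi(t^2)\le\psi(ct)$ for $t\ge T$. $L^\Lambda(N,\tau)=\bigcap_{\phi\in\Lambda}L_\phi(N,\tau)$. An additive derivation is an additive map $\delta$ with $\delta(xy)=\delta(x)y+x\delta(y)$. *)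

theory Defs
  imports "HOL-Analysis.Analysis"
begin

text \<open>Commutative von Neumann algebra M with faithful normal finite trace tau is modelled
  as L-infinity(Omega, Sigma, mu) with mu a finite measure and tau(f) = integral of f d mu.
  Then S(M,tau) is the algebra of (classes of) measurable complex functions; elements are
  represented by functions, identified up to mu-a.e. equality.\<close>

text \<open>Projections of M are classes of measurable sets modulo null sets; the Boolean
  algebra P(M) has no atoms iff the measure has no atoms.\<close>
definition atomless_measure :: "'a measure \<Rightarrow> bool" where
  "atomless_measure M \<longleftrightarrow>
     (\<forall>A\<in>sets M. emeasure M A > 0 \<longrightarrow>
        (\<exists>B\<in>sets M. B \<subseteq> A \<and> 0 < emeasure M B \<and> emeasure M B < emeasure M A))"

definition young_function :: "(real \<Rightarrow> real) \<Rightarrow> bool" where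
  "young_function \<phi> \<longleftrightarrow>
     (\<exists>\<psi> :: real \<Rightarrow> real.
        (\<forall>s\<ge>0. \<psi> s \<ge> 0) \<and>
        (\<forall>s\<ge>0. continuous (at_right s) \<psi>) \<and>
        mono_on {0..} \<psi> \<and>
        \<psi> 0 = 0 \<and>
        (\<forall>s>0. \<psi> s > 0) \<and>
        filterlim \<psi> at_top at_top \<and>
        (\<forall>t\<ge>0. \<phi> t = integral {0..t} \<psi>))"

definition young_prec :: "(real \<Rightarrow> real) \<Rightarrow> (real \<Rightarrow> real) \<Rightarrow> bool" where
  "young_prec \<phi>1 \<phi>2 \<longleftrightarrow> (\<exists>c T. c \<ge> 0 \<and> T \<ge> 0 \<and> (\<forall>t\<ge>T. \<phi>1 t \<le> \<phi>2 (c * t)))"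

definition quadratic_family :: "(real \<Rightarrow> real) set \<Rightarrow> bool" where
  "quadratic_family \<Lambda> \<longleftrightarrow>
     (\<forall>\<phi>\<in>\<Lambda>. young_function \<phi>) \<and>
     (\<forall>\<phi>1\<in>\<Lambda>. \<forall>\<phi>2\<in>\<Lambda>. \<exists>\<phi>\<in>\<Lambda>. young_prec \<phi>1 \<phi> \<and> young_prec \<phi>2 \<phi>) \<and>
     (\<forall>\<phi>\<in>\<Lambda>. \<exists>\<psi>\<in>\<Lambda>. \<exists>c>0. \<exists>T\<ge>0. \<forall>t\<ge>T. \<phi> (t\<^sup>2) \<le> \<psi> (c * t))"

definition orlicz_space :: "'a measure \<Rightarrow> (real \<Rightarrow> real) \<Rightarrow> ('a \<Rightarrow> complex) set" where
  "orlicz_space M \<phi> =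
     {x \<in> borel_measurable M. \<exists>n::nat. n > 0 \<and>
        (\<integral>\<^sup>+ \<omega>. ennreal (\<phi> (cmod (x \<omega>) / real n)) \<partial>M) \<le> 1}"

definition orlicz_intersection :: "'a measure \<Rightarrow> (real \<Rightarrow> real) set \<Rightarrow> ('a \<Rightarrow> complex) set" where
  "orlicz_intersection M \<Lambda> = {x \<in> borel_measurable M. \<forall>\<phi>\<in>\<Lambda>. x \<in> orlicz_space M \<phi>}"

text \<open>An additive derivation on the quotient algebra L, given via representatives.\<close>
definition additive_derivation_on ::
  "'a measure \<Rightarrow> ('a \<Rightarrow> complex) set \<Rightarrow> (('a \<Rightarrow> complex) \<Rightarrow> ('a \<Rightarrow> complex)) \<Rightarrow> bool" where
  "additive_derivation_on M L \<delta> \<longleftrightarrow>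
     (\<forall>x\<in>L. \<delta> x \<in> L) \<and>
     (\<forall>x\<in>L. \<forall>y\<in>L. (AE \<omega> in M. x \<omega> = y \<omega>) \<longrightarrow> (AE \<omega> in M. \<delta> x \<omega> = \<delta> y \<omega>)) \<and>
     (\<forall>x\<in>L. \<forall>y\<in>L. AE \<omega> in M. \<delta> (\<lambda>w. x w + y w) \<omega> = \<delta> x \<omega> + \<delta> y \<omega>) \<and>
     (\<forall>x\<in>L. \<forall>y\<in>L. AE \<omega> in M. \<delta> (\<lambda>w. x w * y w) \<omega> = \<delta> x \<omega> * y \<omega> + x \<omega> * \<delta> y \<omega>)"

end

theory Submission
  imports Defs
begin

lemma young_props:
  assumes "young_function \<phi>"
  shows "(\<forall>a b. 0 \<le> a \<longrightarrow> a \<le> b \<longrightarrow> \<phi> a \<le> \<phi> b)"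
    and "(\<forall>t. 0 \<le> t \<longrightarrow> 0 \<le> \<phi> t)"
    and "(\<exists>c. \<forall>t. 0 \<le> t \<longrightarrow> t \<le> 1 \<longrightarrow> \<phi> t \<le> t * c)"
    and "(\<forall>B. \<exists>T\<ge>0. \<forall>t\<ge>T. B \<le> \<phi> t)"
proof -
  obtain \<psi> :: "real \<Rightarrow> real" where p0: "\<forall>s\<ge>0. \<psi> s \<ge> 0" and mo: "mono_on {0..} \<psi>"
    and pp: "\<forall>s>0. \<psi> s > 0" and de: "\<forall>t\<ge>0. \<phi> t = integral {0..t} \<psi>"
    using assms unfolding young_function_def by blast
  have int: "\<psi> integrable_on {a..b}" if "0 \<le> a" for a b
    by (rule integrable_on_mono_on, rule mono_on_subset[OF mo]) (use that in auto)
  show 1: "\<forall>a b. 0 \<le> a \<longrightarrow> a \<le> b \<longrightarrow> \<phi> a \<le> \<phi> b"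
  proof (intro allI impI)
    fix a b :: real assume "0 \<le> a" "a \<le> b"
    then show "\<phi> a \<le> \<phi> b" using de int[of 0] p0
      by (auto intro!: integral_subset_le)
  qed
  show "\<forall>t. 0 \<le> t \<longrightarrow> 0 \<le> \<phi> t"
    using de int[of 0] p0 by (auto intro!: integral_nonneg)
  show "\<exists>c. \<forall>t. 0 \<le> t \<longrightarrow> t \<le> 1 \<longrightarrow> \<phi> t \<le> t * c"
  proof (intro exI allI impI)
    fix t :: real assume t: "0 \<le> t" "t \<le> 1"
    have "integral {0..t} \<psi> \<le> integral {0..t} (\<lambda>_. \<psi> 1)"
      by (rule integral_le) (use int[of 0] t mo in \<open>auto simp: mono_on_def\<close>)
    also have "\<dots> = t * \<psi> 1" using t by simp
    finally show "\<phi> t \<le> t * \<psi> 1" using de t by simp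
  qed
  show "\<forall>B. \<exists>T\<ge>0. \<forall>t\<ge>T. B \<le> \<phi> t"
  proof
    fix B :: real
    have ps1: "\<psi> 1 > 0" using pp by simp
    show "\<exists>T\<ge>0. \<forall>t\<ge>T. B \<le> \<phi> t"
    proof (intro exI[of _ "max 1 (B / \<psi> 1 + 1)"] conjI allI impI)
      fix t assume t: "max 1 (B / \<psi> 1 + 1) \<le> t"
      have "(t - 1) * \<psi> 1 = integral {1..t} (\<lambda>_. \<psi> 1)" using t by simp
      also have "\<dots> \<le> integral {1..t} \<psi>"
        by (rule integral_le) (use int[of 1] t mo in \<open>auto simp: mono_on_def\<close>)
      also have "\<dots> \<le> integral {0..t} \<psi>"
        by (rule integral_subset_le) (use int[of 1] int[of 0] p0 in auto)
      finally have "(t - 1) * \<psi> 1 \<le> \<phi> t" using de t by simp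
      moreover have "B \<le> (t - 1) * \<psi> 1"
        using t ps1 by (simp add: field_simps)
      ultimately show "B \<le> \<phi> t" by linarith
    qed simp
  qed
qed

lemma atomless_seq:
  assumes fm: "finite_measure M" and al: "atomless_measure M"
    and E: "E \<in> sets M" and pos: "0 < emeasure M E"
  shows "\<exists>e::nat \<Rightarrow> 'a set. (\<forall>n. e n \<in> sets M \<and> e n \<subseteq> E \<and> 0 < emeasure M (e n)) \<and> disjoint_family e"
proof -
  define sp where "sp X = (SOME B. B \<in> sets M \<and> B \<subseteq> X \<and> 0 < emeasure M B \<and> emeasure M B < emeasure M X)" for X
  have sp: "sp X \<in> sets M \<and> sp X \<subseteq> X \<and> 0 < emeasure M (sp X) \<and> emeasure M (sp X) < emeasure M X"
    if "X \<in> sets M" "0 < emeasure M X" for X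
  proof -
    have "\<exists>B. B \<in> sets M \<and> B \<subseteq> X \<and> 0 < emeasure M B \<and> emeasure M B < emeasure M X"
      using al that unfolding atomless_measure_def by blast
    then show ?thesis unfolding sp_def by (rule someI_ex)
  qed
  have rest: "0 < emeasure M (X - sp X)" if "X \<in> sets M" "0 < emeasure M X" for X
  proof -
    have "emeasure M (X - sp X) = emeasure M X - emeasure M (sp X)"
      using sp[OF that] that by (intro emeasure_Diff) (auto simp: finite_measure.emeasure_finite[OF fm])
    then show ?thesis using sp[OF that] by (simp add: diff_gr0_ennreal)
  qed
  define R where "R = rec_nat E (\<lambda>_ X. X - sp X)"
  have R0: "R 0 = E" and RS: "\<And>n. R (Suc n) = R n - sp (R n)" by (simp_all add: R_def)
  have inv: "R n \<in> sets M \<and> R n \<subseteq> E \<and> 0 < emeasure M (R n)" for n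
  proof (induction n)
    case 0 then show ?case using E pos R0 by simp
  next
    case (Suc n)
    have "sp (R n) \<in> sets M" using sp[of "R n"] Suc.IH by blast
    then show ?case unfolding RS using rest[of "R n"] Suc.IH by blast
  qed
  have invS: "R n \<in> sets M" and invE: "R n \<subseteq> E" and invP: "0 < emeasure M (R n)" for n
    using inv[of n] by simp_all
  have spn: "sp (R n) \<in> sets M \<and> sp (R n) \<subseteq> R n \<and> 0 < emeasure M (sp (R n))" for n
    using sp[OF invS invP] by simp
  have anti: "R m \<subseteq> R n" if "n \<le> m" for n m
  proof -
    have RS': "R (Suc k) \<le> R k" for k using RS[of k] by blast
    show ?thesis by (rule lift_Suc_antimono_le[of R, OF RS' that])
  qed
  define e where "e n = sp (R n)" for n
  have D: "disjoint_family e"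
    unfolding disjoint_family_on_def
  proof (intro ballI impI)
    fix m n :: nat assume "m \<noteq> n"
    have key: "e a \<inter> e b = {}" if "a < b" for a b
    proof -
      have "e b \<subseteq> R b" using spn[of b] unfolding e_def by simp
      also have "R b \<subseteq> R (Suc a)" using anti[of "Suc a" b] that by simp
      finally have "e b \<subseteq> R a - e a" using RS[of a] unfolding e_def by simp
      then show ?thesis by blast
    qed
    show "e m \<inter> e n = {}"
    proof (cases "m < n")
      case True then show ?thesis by (rule key)
    next
      case False then have "n < m" using \<open>m \<noteq> n\<close> by simp
      then show ?thesis by (subst Int_commute) (rule key)
    qed
  qed
  have P: "\<forall>n. e n \<in> sets M \<and> e n \<subseteq> E \<and> 0 < emeasure M (e n)"
  proof
    fix n show "e n \<in> sets M \<and> e n \<subseteq> E \<and> 0 < emeasure M (e n)"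
      using spn[of n] invE[of n] unfolding e_def by auto
  qed
  show ?thesis
    apply (rule exI[where x=e])
    using P D by simp
qed

definition bdd :: "'a measure \<Rightarrow> ('a \<Rightarrow> complex) \<Rightarrow> bool" where
  "bdd M g \<longleftrightarrow> g \<in> borel_measurable M \<and> (\<exists>K. \<forall>w. cmod (g w) \<le> K)"

lemma bdd_const[simp]: "bdd M (\<lambda>_. c)" by (auto simp: bdd_def)
lemma bdd_add: "bdd M x \<Longrightarrow> bdd M y \<Longrightarrow> bdd M (\<lambda>w. x w + y w)"
  unfolding bdd_def by (auto intro!: exI[of _ "_ + _"] order_trans[OF norm_triangle_ineq] add_mono)
lemma bdd_mult: "bdd M x \<Longrightarrow> bdd M y \<Longrightarrow> bdd M (\<lambda>w. x w * y w)"
  unfolding bdd_def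
proof (elim conjE exE, intro conjI)
  fix K L assume "\<forall>w. cmod (x w) \<le> K" "\<forall>w. cmod (y w) \<le> L"
  then show "\<exists>K. \<forall>w. cmod (x w * y w) \<le> K"
    by (intro exI[of _ "K * L"] allI) (auto simp: norm_mult intro!: mult_mono order_trans[OF norm_ge_zero])
qed auto
lemma bdd_minus: "bdd M x \<Longrightarrow> bdd M (\<lambda>w. - x w)"
  unfolding bdd_def by auto
lemma bdd_diff: "bdd M x \<Longrightarrow> bdd M y \<Longrightarrow> bdd M (\<lambda>w. x w - y w)"
  using bdd_add[OF _ bdd_minus, of M x y] by simp
lemma bdd_indicator: "S \<in> sets M \<Longrightarrow> bdd M (indicator S :: _ \<Rightarrow> complex)"
  unfolding bdd_def by (auto intro!: exI[of _ 1] simp: indicator_def)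

locale dctx =
  fixes M :: "'a measure" and A :: "('a \<Rightarrow> complex) set" and \<delta> :: "('a \<Rightarrow> complex) \<Rightarrow> ('a \<Rightarrow> complex)"
  assumes fm: "finite_measure M" and Ameas: "A \<subseteq> borel_measurable M"
    and bddA: "\<And>g. bdd M g \<Longrightarrow> g \<in> A"
    and der: "additive_derivation_on M A \<delta>"
begin

lemma dA: "x \<in> A \<Longrightarrow> \<delta> x \<in> A" using der unfolding additive_derivation_on_def by blast
lemma dmeas: "x \<in> A \<Longrightarrow> \<delta> x \<in> borel_measurable M" using dA Ameas by blast
lemma dadd: "x \<in> A \<Longrightarrow> y \<in> A \<Longrightarrow> AE \<omega> in M. \<delta> (\<lambda>w. x w + y w) \<omega> = \<delta> x \<omega> + \<delta> y \<omega>"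
  using der unfolding additive_derivation_on_def by blast
lemma dmul: "x \<in> A \<Longrightarrow> y \<in> A \<Longrightarrow> AE \<omega> in M. \<delta> (\<lambda>w. x w * y w) \<omega> = \<delta> x \<omega> * y \<omega> + x \<omega> * \<delta> y \<omega>"
  using der unfolding additive_derivation_on_def by blast

definition good :: "complex \<Rightarrow> bool" where "good c \<longleftrightarrow> (AE \<omega> in M. \<delta> (\<lambda>_. c) \<omega> = 0)"

lemma cA[simp]: "(\<lambda>_. c) \<in> A" by (rule bddA) simp

lemma good0: "good 0"
  using dadd[OF cA cA, of 0 0] unfolding good_def by auto

lemma good_add: assumes "good a" "good b" shows "good (a + b)"
  using assms dadd[OF cA cA, of a b] unfolding good_def by eventually_elim auto

lemma good_mult: assumes "good a" "good b" shows "good (a * b)"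
  using assms dmul[OF cA cA, of a b] unfolding good_def by eventually_elim auto

lemma good1: "good 1"
  using dmul[OF cA cA, of 1 1] unfolding good_def by eventually_elim auto

lemma good_uminus: assumes "good a" shows "good (- a)"
  using assms dadd[OF cA cA, of a "-a"] good0 unfolding good_def by eventually_elim auto

lemma good_inverse: "good a \<Longrightarrow> good (inverse a)"
proof (cases "a = 0")
  case True then show ?thesis using good0 by simp
next
  case False
  assume g: "good a"
  have "AE \<omega> in M. \<delta> (\<lambda>_. inverse a) \<omega> = 0"
    using dmul[OF cA cA, of a "inverse a"] good1 g unfolding good_def
  proof eventually_elim
    case (elim \<omega>) then show ?case using False by simp
  qed
  then show ?thesis unfolding good_def .
qed

lemma goodi: "good \<i>"
proof -
  have "good (-1)" by (rule good_uminus[OF good1])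
  then show ?thesis using dmul[OF cA cA, of \<i> \<i>] unfolding good_def
    by eventually_elim auto
qed

lemma good_of_nat: "good (of_nat n)"
  by (induction n) (auto simp: good0 intro!: good_add good1)

lemma good_of_int: "good (of_int z)"
proof (cases "z \<ge> 0")
  case True
  then have "(of_int z :: complex) = of_nat (nat z)" by simp
  then show ?thesis by (simp only: good_of_nat)
next
  case False
  then have "(of_int z :: complex) = - of_nat (nat (- z))" by simp
  then show ?thesis using good_uminus[OF good_of_nat] by simp
qed

lemma good_gauss: "good ((of_int a + \<i> * of_int b) / of_nat N)"
  unfolding divide_inverse
  by (intro good_mult good_add good_of_int goodi good_inverse good_of_nat)

lemma ind_zero: "S \<in> sets M \<Longrightarrow> AE \<omega> in M. \<delta> (indicator S) \<omega> = 0"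
proof -
  assume S: "S \<in> sets M"
  have iA: "(indicator S :: _ \<Rightarrow> complex) \<in> A" by (rule bddA[OF bdd_indicator[OF S]])
  have e: "(\<lambda>w. indicator S w * indicator S w :: complex) = indicator S"
    by (auto simp: indicator_def)
  show ?thesis using dmul[OF iA iA] unfolding e
  proof eventually_elim
    case (elim \<omega>)
    then show ?case by (cases "\<omega> \<in> S") (auto simp: indicator_def)
  qed
qed

lemma local: assumes "S \<in> sets M" "y \<in> A" shows
   "AE \<omega> in M. \<delta> (\<lambda>w. indicator S w * y w) \<omega> = indicator S \<omega> * \<delta> y \<omega>"
  using dmul[OF bddA[OF bdd_indicator[OF assms(1)]] assms(2)] ind_zero[OF assms(1)] by eventually_elim auto

lemma scal: assumes "good c" "y \<in> A" shows "AE \<omega> in M. \<delta> (\<lambda>w. c * y w) \<omega> = c * \<delta> y \<omega>"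
  using assms(1) dmul[OF cA assms(2), of c] unfolding good_def by eventually_elim auto

lemma countable_vals:
  assumes C: "countable C" and g: "\<forall>c\<in>C. good c" and y: "y \<in> A" and v: "\<forall>w. y w \<in> C"
  shows "AE \<omega> in M. \<delta> y \<omega> = 0"
proof -
  have "AE \<omega> in M. \<forall>c\<in>C. y \<omega> = c \<longrightarrow> \<delta> y \<omega> = 0"
  proof (subst AE_ball_countable[OF C], intro ballI)
    fix c assume c: "c \<in> C"
    have ym: "y \<in> borel_measurable M" using y Ameas by blast
    define S where "S = y -` {c} \<inter> space M"
    have S: "S \<in> sets M" unfolding S_def by (rule measurable_sets[OF ym]) simp
    have e: "(\<lambda>w. indicator S w * y w) = (\<lambda>w. indicator S w * (\<lambda>_. c) w)"
      by (auto simp: S_def indicator_def)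
    have "AE \<omega> in M. indicator S \<omega> * \<delta> y \<omega> = indicator S \<omega> * \<delta> (\<lambda>_. c) \<omega>"
      using local[OF S y] local[OF S cA, of c] unfolding e by eventually_elim auto
    moreover have "AE \<omega> in M. \<delta> (\<lambda>_. c) \<omega> = 0" using g c unfolding good_def by blast
    ultimately show "AE \<omega> in M. y \<omega> = c \<longrightarrow> \<delta> y \<omega> = 0"
      using AE_space
    proof eventually_elim
      case (elim \<omega>)
      then show ?case by (auto simp: S_def indicator_def)
    qed
  qed
  then show ?thesis by eventually_elim (use v in auto)
qed

end

lemma bdd_in_orlicz:
  assumes fm: "finite_measure M" and yf: "young_function \<phi>" and g: "bdd M g"
  shows "g \<in> orlicz_space M \<phi>"
proof -
  obtain K0 where K0: "\<forall>w. cmod (g w) \<le> K0" and gm: "g \<in> borel_measurable M"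
    using g unfolding bdd_def by blast
  define K where "K = max K0 0"
  have K: "\<forall>w. cmod (g w) \<le> K" "0 \<le> K" using K0 unfolding K_def by (auto intro: order_trans)
  note Y = young_props[OF yf]
  obtain c where c: "\<forall>t. 0 \<le> t \<longrightarrow> t \<le> 1 \<longrightarrow> \<phi> t \<le> t * c" using Y(3) by blast
  define C where "C = max c 0 + 1"
  have C: "0 < C" "c \<le> C" unfolding C_def by auto
  define mu where "mu = measure M (space M)"
  have mu: "0 \<le> mu" unfolding mu_def by simp
  have em: "emeasure M (space M) = ennreal mu"
    unfolding mu_def using finite_measure.emeasure_eq_measure[OF fm] by simp
  define n :: nat where "n = Suc (nat \<lceil>K * C * mu + K\<rceil>)"
  have nge: "K * C * mu + K \<le> real n" unfolding n_def by linarith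
  have npos: "0 < real n" unfolding n_def by simp
  have KCm: "0 \<le> K * C * mu" using K(2) C mu by simp
  have Kn: "K / real n \<le> 1" using nge KCm npos by (simp add: field_simps)
  have Kn0: "0 \<le> K / real n" using K(2) npos by simp
  have bound: "\<phi> (K / real n) * mu \<le> 1"
  proof -
    have "\<phi> (K / real n) \<le> K / real n * c" using c Kn Kn0 by blast
    also have "\<dots> \<le> K / real n * C" using C Kn0 by (intro mult_left_mono) auto
    finally have "\<phi> (K / real n) * mu \<le> K / real n * C * mu" using mu by (intro mult_right_mono)
    also have "\<dots> = K * C * mu / real n" by simp
    also have "\<dots> \<le> 1" using nge K(2) npos by (simp add: divide_le_eq)
    finally show ?thesis .
  qed
  have "(\<integral>\<^sup>+ \<omega>. ennreal (\<phi> (cmod (g \<omega>) / real n)) \<partial>M) \<le> (\<integral>\<^sup>+ \<omega>. ennreal (\<phi> (K / real n)) \<partial>M)"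
  proof (intro nn_integral_mono ennreal_leI)
    fix w
    have "cmod (g w) / real n \<le> K / real n" using K npos by (simp add: divide_right_mono)
    then show "\<phi> (cmod (g w) / real n) \<le> \<phi> (K / real n)" using Y(1) npos by simp
  qed
  also have "\<dots> = ennreal (\<phi> (K / real n)) * ennreal mu" using em by simp
  also have "\<dots> = ennreal (\<phi> (K / real n) * mu)" by (rule ennreal_mult[symmetric]) (use Y(2) Kn0 mu in auto)
  also have "\<dots> \<le> 1" using bound by simp
  finally have "(\<integral>\<^sup>+ \<omega>. ennreal (\<phi> (cmod (g \<omega>) / real n)) \<partial>M) \<le> 1" .
  then show ?thesis unfolding orlicz_space_def using gm n_def by auto
qed

context dctx
begin

lemma bdd_zero:
  assumes al: "atomless_measure M" and Aphi: "A \<subseteq> orlicz_space M \<phi>"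
    and yf: "young_function \<phi>" and g: "bdd M g"
  shows "AE \<omega> in M. \<delta> g \<omega> = 0"
proof (rule ccontr)
  assume nz: "\<not> (AE \<omega> in M. \<delta> g \<omega> = 0)"
  note Y = young_props[OF yf]
  have gA: "g \<in> A" by (rule bddA[OF g])
  have gm[measurable]: "g \<in> borel_measurable M" using g unfolding bdd_def by blast
  define f where "f = \<delta> g"
  have fmeas[measurable]: "f \<in> borel_measurable M" unfolding f_def by (rule dmeas[OF gA])
  have "\<exists>k::nat. 0 < emeasure M {\<omega> \<in> space M. 1 / real (Suc k) < cmod (f \<omega>)}"
  proof (rule ccontr)
    assume "\<not> ?thesis"
    then have z: "emeasure M {\<omega> \<in> space M. 1 / real (Suc k) < cmod (f \<omega>)} = 0" for k
      by (simp add: not_less)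
    have nul: "(\<Union>k. {\<omega> \<in> space M. 1 / real (Suc k) < cmod (f \<omega>)}) \<in> null_sets M"
      by (intro null_sets_UN null_setsI z) measurable
    have "AE \<omega> in M. \<delta> g \<omega> = 0"
    proof (rule AE_I'[OF nul], safe)
      fix \<omega> assume "\<omega> \<in> space M" "\<delta> g \<omega> \<noteq> 0"
      then have "0 < cmod (f \<omega>)" unfolding f_def by simp
      then obtain k where "inverse (real (Suc k)) < cmod (f \<omega>)"
        using reals_Archimedean by blast
      then show "\<omega> \<in> (\<Union>k. {\<omega> \<in> space M. 1 / real (Suc k) < cmod (f \<omega>)})"
        using \<open>\<omega> \<in> space M\<close> by (auto simp: inverse_eq_divide)
    qed
    then show False using nz by simp
  qed
  then obtain k :: nat where kpos: "0 < emeasure M {\<omega> \<in> space M. 1 / real (Suc k) < cmod (f \<omega>)}"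
    by blast
  define \<epsilon> where "\<epsilon> = 1 / real (Suc k)"
  have \<epsilon>: "0 < \<epsilon>" unfolding \<epsilon>_def by simp
  define E where "E = {\<omega> \<in> space M. \<epsilon> < cmod (f \<omega>)}"
  have E: "E \<in> sets M" unfolding E_def by measurable
  have Epos: "0 < emeasure M E" using kpos unfolding E_def \<epsilon>_def .
  obtain e :: "nat \<Rightarrow> 'a set" where e0: "\<forall>n. e n \<in> sets M \<and> e n \<subseteq> E \<and> 0 < emeasure M (e n)"
    and dj: "disjoint_family e"
    using atomless_seq[OF fm al E Epos] by blast
  have e: "\<And>n. e n \<in> sets M" "\<And>n. e n \<subseteq> E" "\<And>n. 0 < emeasure M (e n)"
    using e0 by simp_all
  define m where "m n = measure M (e n)" for n
  have em: "emeasure M (e n) = ennreal (m n)" for n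
    unfolding m_def using finite_measure.emeasure_eq_measure[OF fm] by simp
  have mpos: "0 < m n" for n using e(3)[of n] em[of n] by simp
  have exN: "\<exists>N::nat. 0 < N \<and> 2 \<le> m n * \<phi> (real N * \<epsilon> / real (Suc n))" for n
  proof -
    obtain T where T: "T \<ge> 0" "\<forall>t\<ge>T. 2 / m n \<le> \<phi> t" using Y(4) by blast
    obtain N0 :: nat where N0: "T * real (Suc n) / \<epsilon> \<le> real N0" using real_arch_simple by blast
    define N where "N = Suc N0"
    have "T \<le> real N * \<epsilon> / real (Suc n)"
      using N0 \<epsilon> unfolding N_def by (simp add: field_simps)
    then have "2 / m n \<le> \<phi> (real N * \<epsilon> / real (Suc n))" using T by blast
    then have "2 \<le> m n * \<phi> (real N * \<epsilon> / real (Suc n))"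
      using mpos[of n] by (simp add: field_simps)
    then show ?thesis unfolding N_def by blast
  qed
  have "\<exists>N::nat \<Rightarrow> nat. \<forall>n. 0 < N n \<and> 2 \<le> m n * \<phi> (real (N n) * \<epsilon> / real (Suc n))"
    by (rule choice) (rule allI, rule exN)
  then obtain N :: "nat \<Rightarrow> nat" where N': "\<forall>n. 0 < N n \<and> 2 \<le> m n * \<phi> (real (N n) * \<epsilon> / real (Suc n))"
    by (rule exE)
  have N: "\<And>n. 0 < N n" "\<And>n. 2 \<le> m n * \<phi> (real (N n) * \<epsilon> / real (Suc n))"
    using N' by simp_all
  define s where "s n w = (of_int \<lfloor>real (N n) * Re (g w)\<rfloor> + \<i> * of_int \<lfloor>real (N n) * Im (g w)\<rfloor>) / of_nat (N n)" for n w
  define c where "c n w = of_nat (N n) * (g w - s n w)" for n w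
  have sm[measurable]: "s n \<in> borel_measurable M" for n unfolding s_def by measurable
  have cm[measurable]: "c n \<in> borel_measurable M" for n unfolding c_def by measurable
  have cbound: "cmod (c n w) \<le> 2" for n w
  proof -
    have Nn: "real (N n) \<noteq> 0" using N(1)[of n] by simp
    have "c n w = Complex (real (N n) * Re (g w) - of_int \<lfloor>real (N n) * Re (g w)\<rfloor>)
                          (real (N n) * Im (g w) - of_int \<lfloor>real (N n) * Im (g w)\<rfloor>)"
      using Nn by (simp add: c_def s_def complex_eq_iff field_simps)
    also have "cmod \<dots> \<le> 2"
      by (rule order_trans[OF cmod_le]) (simp, linarith)
    finally show ?thesis .
  qed
  have cb: "bdd M (c n)" for n unfolding bdd_def using cbound by auto
  have tb: "bdd M (\<lambda>w. g w - s n w)" for n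
  proof -
    have "(\<lambda>w. g w - s n w) = (\<lambda>w. (\<lambda>_. inverse (of_nat (N n))) w * c n w)"
      using N(1)[of n] by (auto simp: c_def)
    then show ?thesis using bdd_mult[OF bdd_const cb] by simp
  qed
  have sb: "bdd M (s n)" for n
  proof -
    have "s n = (\<lambda>w. g w - (g w - s n w))" by auto
    then show ?thesis using bdd_diff[OF g tb[of n]] by simp
  qed
  have ds: "AE \<omega> in M. \<delta> (s n) \<omega> = 0" for n
  proof (rule countable_vals)
    let ?C = "(\<lambda>(a, b). (of_int a + \<i> * of_int b) / of_nat (N n)) ` (UNIV :: (int \<times> int) set)"
    show "countable ?C" by simp
    show "\<forall>c\<in>?C. good c" using good_gauss by auto
    show "s n \<in> A" by (rule bddA[OF sb])
    show "\<forall>w. s n w \<in> ?C" unfolding s_def by auto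
  qed
  have dt: "AE \<omega> in M. \<delta> (\<lambda>w. g w - s n w) \<omega> = f \<omega>" for n
  proof -
    have e1: "(\<lambda>w. (g w - s n w) + s n w) = g" by auto
    show ?thesis using dadd[OF bddA[OF tb[of n]] bddA[OF sb[of n]]] ds[of n] unfolding e1 f_def
      by eventually_elim auto
  qed
  have dc: "AE \<omega> in M. \<delta> (c n) \<omega> = of_nat (N n) * f \<omega>" for n
  proof -
    have e1: "c n = (\<lambda>w. of_nat (N n) * (g w - s n w))" by (auto simp: c_def fun_eq_iff)
    show ?thesis using scal[OF good_of_nat bddA[OF tb[of n]], of "N n"] dt[of n] unfolding e1
      by eventually_elim auto
  qed
  define y where "y w = (\<Sum>j. indicator (e j) w * c j w)" for w
  have ysum: "(\<lambda>j. indicator (e j) w * c j w) sums y w" for w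
  proof (cases "\<exists>j. w \<in> e j")
    case True
    then obtain j where j: "w \<in> e j" by blast
    have "(\<lambda>i. indicator (e i) w * c i w) = (\<lambda>i. if i = j then c j w else 0)"
    proof
      fix i show "indicator (e i) w * c i w = (if i = j then c j w else 0)"
      proof (cases "i = j")
        case False
        then have "w \<notin> e i" using dj j unfolding disjoint_family_on_def by blast
        then show ?thesis using False by simp
      qed (use j in simp)
    qed
    then have "(\<lambda>i. indicator (e i) w * c i w) sums c j w" using sums_single[of j "\<lambda>_. c j w"] by simp
    then show ?thesis unfolding y_def by (simp add: sums_iff)
  next
    case False
    then have "(\<lambda>i. indicator (e i) w * c i w) = (\<lambda>_. 0)" by auto
    then show ?thesis unfolding y_def by simp
  qed
  have yval: "w \<in> e j \<Longrightarrow> y w = c j w" for w j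
  proof -
    assume j: "w \<in> e j"
    have "(\<lambda>i. indicator (e i) w * c i w) = (\<lambda>i. if i = j then c j w else 0)"
    proof
      fix i show "indicator (e i) w * c i w = (if i = j then c j w else 0)"
      proof (cases "i = j")
        case False
        then have "w \<notin> e i" using dj j unfolding disjoint_family_on_def by blast
        then show ?thesis using False by simp
      qed (use j in simp)
    qed
    then have "(\<lambda>i. indicator (e i) w * c i w) sums c j w" using sums_single[of j "\<lambda>_. c j w"] by simp
    then show ?thesis using ysum[of w] sums_unique2 by blast
  qed
  have ym: "y \<in> borel_measurable M"
  proof (rule borel_measurable_LIMSEQ_metric)
    show "(\<lambda>w. \<Sum>i<j. indicator (e i) w * c i w) \<in> borel_measurable M" for j
      using e(1) by measurable
    show "(\<lambda>j. \<Sum>i<j. indicator (e i) w * c i w) \<longlonglongrightarrow> y w" for w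
      using ysum[of w] unfolding sums_def .
  qed
  have ybound: "cmod (y w) \<le> 2" for w
  proof (cases "\<exists>j. w \<in> e j")
    case True then obtain j where "w \<in> e j" by blast
    then show ?thesis using yval cbound by simp
  next
    case False
    then have "(\<lambda>i. indicator (e i) w * c i w) = (\<lambda>_. 0)" by auto
    then have "y w = 0" using ysum[of w] sums_unique2 sums_zero by metis
    then show ?thesis by simp
  qed
  have yA: "y \<in> A" using bddA ym ybound unfolding bdd_def by blast
  have "\<delta> y \<in> orlicz_space M \<phi>" using dA[OF yA] Aphi by blast
  then obtain K :: nat where K: "0 < K"
    and int: "(\<integral>\<^sup>+ \<omega>. ennreal (\<phi> (cmod (\<delta> y \<omega>) / real K)) \<partial>M) \<le> 1"
    unfolding orlicz_space_def by blast
  have eqf: "(\<lambda>w. indicator (e K) w * y w) = (\<lambda>w. indicator (e K) w * c K w)"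
    using yval[of _ K] by (auto simp: indicator_def fun_eq_iff)
  have loc: "AE \<omega> in M. indicator (e K) \<omega> * \<delta> y \<omega> = indicator (e K) \<omega> * (of_nat (N K) * f \<omega>)"
    using local[OF e(1) yA, of K] local[OF e(1) bddA[OF cb], of K K] dc[of K] unfolding eqf
    by eventually_elim auto
  define v where "v = \<phi> (real (N K) * \<epsilon> / real (Suc K))"
  have "AE \<omega> in M. ennreal v * indicator (e K) \<omega> \<le> ennreal (\<phi> (cmod (\<delta> y \<omega>) / real K))"
    using loc
  proof eventually_elim
    case (elim \<omega>)
    show ?case
    proof (cases "\<omega> \<in> e K")
      case True
      then have d: "\<delta> y \<omega> = of_nat (N K) * f \<omega>" using elim by simp
      have "\<epsilon> < cmod (f \<omega>)" using e(2)[of K] True unfolding E_def by blast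
      then have "real (N K) * \<epsilon> \<le> cmod (\<delta> y \<omega>)" unfolding d norm_mult
        by (simp add: mult_left_mono)
      have a0: "0 \<le> real (N K) * \<epsilon>" using \<epsilon> by simp
      have "real (N K) * \<epsilon> / real (Suc K) \<le> real (N K) * \<epsilon> / real K"
        by (rule divide_left_mono) (use a0 K in auto)
      also have "\<dots> \<le> cmod (\<delta> y \<omega>) / real K"
        by (rule divide_right_mono) (use \<open>real (N K) * \<epsilon> \<le> cmod (\<delta> y \<omega>)\<close> in auto)
      finally have le: "real (N K) * \<epsilon> / real (Suc K) \<le> cmod (\<delta> y \<omega>) / real K" .
      have ge0: "0 \<le> real (N K) * \<epsilon> / real (Suc K)" using a0 by simp
      have "v \<le> \<phi> (cmod (\<delta> y \<omega>) / real K)" unfolding v_def using Y(1)[rule_format, OF ge0 le] .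
      then show ?thesis using True by (simp add: ennreal_leI)
    qed simp
  qed
  then have "(\<integral>\<^sup>+ \<omega>. ennreal v * indicator (e K) \<omega> \<partial>M) \<le> (\<integral>\<^sup>+ \<omega>. ennreal (\<phi> (cmod (\<delta> y \<omega>) / real K)) \<partial>M)"
    by (rule nn_integral_mono_AE)
  also have "\<dots> \<le> 1" by (rule int)
  finally have le1: "ennreal v * emeasure M (e K) \<le> 1"
    using nn_integral_cmult_indicator[OF e(1)[of K], of "ennreal v"] by simp
  have v0: "0 \<le> v" unfolding v_def using Y(2) \<epsilon> by simp
  have "ennreal v * emeasure M (e K) = ennreal (v * m K)"
    using em[of K] v0 mpos[of K] by (simp add: ennreal_mult)
  moreover have "2 \<le> v * m K" using N(2)[of K] unfolding v_def by (simp add: mult.commute)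
  ultimately have "ennreal 2 \<le> ennreal v * emeasure M (e K)" by (simp add: ennreal_leI)
  then have "ennreal 2 \<le> 1" using le1 by (rule order_trans)
  then show False by simp
qed

lemma all_zero:
  assumes al: "atomless_measure M" and Aphi: "A \<subseteq> orlicz_space M \<phi>"
    and yf: "young_function \<phi>" and x: "x \<in> A"
  shows "AE \<omega> in M. \<delta> x \<omega> = 0"
proof -
  have xm[measurable]: "x \<in> borel_measurable M" using x Ameas by blast
  define S where "S m = {\<omega> \<in> space M. cmod (x \<omega>) \<le> real m}" for m :: nat
  have S[measurable]: "S m \<in> sets M" for m unfolding S_def by measurable
  have Hm: "AE \<omega> in M. indicator (S m) \<omega> * \<delta> x \<omega> = 0" for m
  proof -
    have b: "bdd M (\<lambda>w. indicator (S m) w * x w)"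
      unfolding bdd_def
    proof
      show "(\<lambda>w. indicator (S m) w * x w) \<in> borel_measurable M" by measurable
      show "\<exists>K. \<forall>w. cmod (indicator (S m) w * x w) \<le> K"
        by (rule exI[of _ "real m"]) (auto simp: S_def indicator_def)
    qed
    show ?thesis using bdd_zero[OF al Aphi yf b] local[OF S x, of m] by eventually_elim auto
  qed
  have "AE \<omega> in M. \<forall>m. indicator (S m) \<omega> * \<delta> x \<omega> = 0"
    by (subst AE_all_countable) (rule allI, rule Hm)
  then show ?thesis using AE_space
  proof eventually_elim
    case (elim \<omega>)
    obtain m :: nat where "cmod (x \<omega>) \<le> real m" using real_arch_simple by blast
    then have "\<omega> \<in> S m" using elim unfolding S_def by blast
    then have i1: "indicator (S m) \<omega> = (1::complex)" by simp
    from elim(1) have "indicator (S m) \<omega> * \<delta> x \<omega> = 0" by blast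
    then show ?case using i1 by simp
  qed
qed

end

theorem corollary3p1:
  fixes M :: "'a measure" and \<Lambda> :: "(real \<Rightarrow> real) set"
    and \<delta> :: "('a \<Rightarrow> complex) \<Rightarrow> ('a \<Rightarrow> complex)"
  assumes "finite_measure M"
    and "atomless_measure M"
    and "\<Lambda> \<noteq> {}"
    and "quadratic_family \<Lambda>"
    and "additive_derivation_on M (orlicz_intersection M \<Lambda>) \<delta>"
  shows "\<forall>x\<in>orlicz_intersection M \<Lambda>. AE \<omega> in M. \<delta> x \<omega> = 0"
proof -
  obtain \<phi> where ph: "\<phi> \<in> \<Lambda>" using assms(3) by blast
  have yall: "\<forall>\<psi>\<in>\<Lambda>. young_function \<psi>" using assms(4) unfolding quadratic_family_def by blast
  have yf: "young_function \<phi>" using yall ph by blast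
  have D: "dctx M (orlicz_intersection M \<Lambda>) \<delta>"
  proof (rule dctx.intro)
    show "finite_measure M" by (rule assms(1))
    show "orlicz_intersection M \<Lambda> \<subseteq> borel_measurable M" unfolding orlicz_intersection_def by blast
    show "additive_derivation_on M (orlicz_intersection M \<Lambda>) \<delta>" by (rule assms(5))
    fix g :: "'a \<Rightarrow> complex" assume g: "bdd M g"
    have "\<forall>\<psi>\<in>\<Lambda>. g \<in> orlicz_space M \<psi>"
      using bdd_in_orlicz[OF assms(1) _ g] yall by blast
    then show "g \<in> orlicz_intersection M \<Lambda>"
      using g unfolding orlicz_intersection_def bdd_def by blast
  qed
  interpret dctx M "orlicz_intersection M \<Lambda>" \<delta> by (rule D)
  have Aphi: "orlicz_intersection M \<Lambda> \<subseteq> orlicz_space M \<phi>"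
    using ph unfolding orlicz_intersection_def by blast
  show ?thesis using all_zero[OF assms(2) Aphi yf] by blast
qed

end
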